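(* Let $M,K$ be positive integers and let $R_1,\dots,R_n$ be positive integers with $R_i<2^K$. Let $s_i\in\{0,1,\dots,R_i-1\}$ for $i=1,\dots,n$. Starting from state $c_0=2^M$ and empty bit-stream $\mathtt{bs}_0$, encode $s_1,\dots,s_n$ in order with the UBCS encoder, where $s_i$ is encoded using $U(0,R_i)$, and let $c_i,\mathtt{bs}_i$ denote the state and bit-stream after encoding $s_i$. Then, starting from $(c_n,\mathtt{bs}_n)$, decode sequentially with the UBCS decoder using $U(0,R_n),U(0,R_{n-1}),\dots,U(0,R_1)$, obtaining symbols $s'_n,s'_{n-1},\dots,s'_1$, and let $c'_i,\mathtt{bs}'_i$ denote the state and bit-stream after decoding $s'_{i+1}$. Then: (P1) $s'_{i+1}=s_{i+1}$, $c'_i=c_i$ and $\mathtt{bs}'_i=\mathtt{bs}_i$ for all $i=0,\dots,n-1$. (P2) Letting $l_i=\lceil\log c_i\rceil+\mathtt{len}(\mathtt{bs}_i)$, where $\mathtt{len}$ is the total number of bits in the bit-stream, $$l_n-l_0<\frac{1}{1-1/(\ln 2\cdot 2^M\cdot K)}\Big[\sum_{i=1}^n\log R_i+1+(\ln 2\cdot 2^M)^{-1}\Big].$$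
   Context: All logarithms $\log$ are base 2. The Uniform Base Conversion System (UBCS) has an integer state $c$ and a bit-stream $\mathtt{bs}$, which is a stack of $K$-bit chunks. ENCODE a symbol $s\in\{0,\dots,R-1\}$ using $U(0,R)$ (with $R<2^K$): set $c\gets c\cdot R+s$; if $c\ge 2^{M+K}$, push the $K$-bit value $c\bmod 2^K$ onto the end of $\mathtt{bs}$ and set $c\gets\lfloor c/2^K\rfloor$; return $(c,\mathtt{bs})$. DECODE using $U(0,R)$ (with $R<2^K$): if $c<2^M\cdot R$, pop the last $K$-bit value $r$ from $\mathtt{bs}$ and set $c\gets 2^K\cdot c+r$; then set $s\gets c\bmod R$ and $c\gets\lfloor c/R\rfloor$; return $(s,c,\mathtt{bs})$. *)

theory Defs
  imports Complex_Main
begin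

text \<open>UBCS state: integer state c and a bit-stream given as a stack (list) of K-bit chunks;
  pushing/popping happens at the end of the list.\<close>

definition ubcs_encode :: "nat \<Rightarrow> nat \<Rightarrow> nat \<Rightarrow> nat \<Rightarrow> nat \<times> nat list \<Rightarrow> nat \<times> nat list" where
  "ubcs_encode M K R s st =
     (let c = fst st * R + s; bs = snd st in
      if c \<ge> 2 ^ (M + K) then (c div 2 ^ K, bs @ [c mod 2 ^ K]) else (c, bs))"

definition ubcs_decode :: "nat \<Rightarrow> nat \<Rightarrow> nat \<Rightarrow> nat \<times> nat list \<Rightarrow> nat \<times> nat \<times> nat list" where
  "ubcs_decode M K R st =
     (let (c, bs) = (if fst st < 2 ^ M * R
                     then (2 ^ K * fst st + last (snd st), butlast (snd st))
                     else st)
      in (c mod R, c div R, bs))"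

definition bs_len :: "nat \<Rightarrow> nat list \<Rightarrow> nat" where
  "bs_len K bs = K * length bs"

end

theory Submission
  imports Defs
begin

lemma enc_inv:
  fixes M K R s c :: nat
  assumes "2^M \<le> c" "c < 2^(M+K)" "0<R" "R<2^K" "s<R"
  shows "2^M \<le> fst (ubcs_encode M K R s (c,bs)) \<and> fst (ubcs_encode M K R s (c,bs)) < 2^(M+K)"
proof -
  define x where "x = c*R+s"
  have x1: "x < (c+1)*R" using assms by (simp add: x_def)
  have "(c+1)*R \<le> 2^(M+K)*R" using assms by (intro mult_right_mono) auto
  also have "\<dots> < 2^(M+K)*2^K" using assms by simp
  finally have x2: "x < 2^(M+K)*2^K" using x1 by linarith
  have "c \<le> c*R" using assms(3) by simp
  then have x3: "c \<le> x" unfolding x_def by linarith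
  show ?thesis
  proof (cases "x \<ge> 2^(M+K)")
    case True
    have a: "2^M \<le> x div 2^K"
      using True by (simp add: less_eq_div_iff_mult_less_eq power_add)
    have b: "x div 2^K < 2^(M+K)" using x2 by (simp add: less_mult_imp_div_less)
    show ?thesis using True a b by (simp add: ubcs_encode_def Let_def x_def[symmetric])
  next
    case False
    then show ?thesis using x3 assms by (simp add: ubcs_encode_def Let_def x_def[symmetric])
  qed
qed

lemma dec_enc:
  fixes M K R s c :: nat
  assumes "2^M \<le> c" "c < 2^(M+K)" "0<R" "R<2^K" "s<R"
  shows "ubcs_decode M K R (ubcs_encode M K R s (c,bs)) = (s, c, bs)"
proof -
  define x where "x = c*R+s"
  have x1: "x < (c+1)*R" using assms by (simp add: x_def)
  have "(c+1)*R \<le> 2^(M+K)*R" using assms by (intro mult_right_mono) auto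
  then have x2: "x < 2^M*R*2^K" using x1 by (simp add: power_add mult_ac)
  have xm: "x mod R = s" "x div R = c" using assms by (simp_all add: x_def)
  show ?thesis
  proof (cases "x \<ge> 2^(M+K)")
    case True
    have b: "x div 2^K < 2^M*R" using x2 by (simp add: less_mult_imp_div_less)
    have e: "2^K * (x div 2^K) + x mod 2^K = x" by simp
    show ?thesis using True b e xm
      by (simp add: ubcs_encode_def ubcs_decode_def Let_def x_def[symmetric])
  next
    case False
    have "2^M * R \<le> c * R" using assms by simp
    then have "\<not> x < 2^M * R" unfolding x_def by linarith
    then show ?thesis using False xm
      by (simp add: ubcs_encode_def ubcs_decode_def Let_def x_def[symmetric])
  qed
qed

lemma key_log:
  fixes c R s :: nat
  assumes "1 \<le> c" "1 \<le> R" "s < R"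
  shows "log 2 (c*R+s) - log 2 c - log 2 R \<le> 1/(c*ln 2) - 1/((c*R+s)*ln 2)"
proof -
  define x where "x = real (c*R+s)"
  have cpos: "real c > 0" "real R > 0" using assms by auto
  have "c*R > 0" using assms by simp
  then have xpos: "x > 0" unfolding x_def by linarith
  have "log 2 x - log 2 c - log 2 R = ln (x/(c*R)) / ln 2"
    using cpos xpos by (simp add: log_def ln_div ln_mult diff_divide_distrib add_divide_distrib)
  also have "ln (x/(c*R)) \<le> x/(c*R) - 1" using cpos xpos by (intro ln_le_minus_one) simp
  then have "ln (x/(c*R)) / ln 2 \<le> (x/(c*R) - 1) / ln 2" by (simp add: divide_right_mono)
  also have "x/(c*R) - 1 = s/(c*R)" using cpos by (simp add: x_def field_simps)
  also have "s/(c*R) \<le> 1/c - 1/x"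
  proof -
    have xe: "x = real c * real R + real s" by (simp add: x_def)
    have "real s * x \<le> real R * (x - real c)"
    proof -
      have "real s \<le> real R - 1" using assms by (simp add: of_nat_less_iff[symmetric] del: of_nat_less_iff) 
      then have "0 \<le> real c * real R * (real R - 1 - real s) + real s * (real R - real s)" using assms cpos by simp
      then show ?thesis unfolding xe by (simp add: algebra_simps)
    qed
    then show ?thesis using cpos xpos by (simp add: field_simps)
  qed
  then have "s/(c*R) / ln 2 \<le> (1/c - 1/x) / ln 2" by (intro divide_right_mono) auto
  also have "(1/c - 1/x) / ln 2 = 1/(c*ln 2) - 1/(x * ln 2)" by (simp add: field_simps)
  finally show ?thesis by (simp add: x_def)
qed

lemma ln2_half: "ln (2::real) > 1/2"
proof -
  have "exp 1 < (4::real)" using exp_le by linarith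
  then have "ln (exp 1) < ln (4::real)" by (subst ln_less_cancel_iff) auto
  moreover have "ln (4::real) = 2 * ln 2"
    using ln_mult[of 2 2] by simp
  ultimately show ?thesis by simp
qed

theorem theorem1:
  fixes M K n :: nat
    and R s :: "nat \<Rightarrow> nat"
    and c :: "nat \<Rightarrow> nat" and bs :: "nat \<Rightarrow> nat list"
    and s' :: "nat \<Rightarrow> nat" and c' :: "nat \<Rightarrow> nat" and bs' :: "nat \<Rightarrow> nat list"
  assumes M_pos: "M > 0" and K_pos: "K > 0"
    and R_pos: "\<And>i. 1 \<le> i \<Longrightarrow> i \<le> n \<Longrightarrow> R i > 0"
    and R_lt: "\<And>i. 1 \<le> i \<Longrightarrow> i \<le> n \<Longrightarrow> R i < 2 ^ K"
    and s_lt: "\<And>i. 1 \<le> i \<Longrightarrow> i \<le> n \<Longrightarrow> s i < R i"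
    and enc0: "c 0 = 2 ^ M" "bs 0 = []"
    and enc_step: "\<And>i. i < n \<Longrightarrow>
        (c (Suc i), bs (Suc i)) = ubcs_encode M K (R (Suc i)) (s (Suc i)) (c i, bs i)"
    and dec0: "c' n = c n" "bs' n = bs n"
    and dec_step: "\<And>i. i < n \<Longrightarrow>
        (s' (Suc i), c' i, bs' i) = ubcs_decode M K (R (Suc i)) (c' (Suc i), bs' (Suc i))"
  shows "(\<forall>i<n. s' (Suc i) = s (Suc i) \<and> c' i = c i \<and> bs' i = bs i) \<and>
    (let l = (\<lambda>i. real_of_int \<lceil>log 2 (real (c i))\<rceil> + real (bs_len K (bs i))) in
      l n - l 0 < 1 / (1 - 1 / (ln 2 * 2 ^ M * real K)) *
        ((\<Sum>i=1..n. log 2 (real (R i))) + 1 + 1 / (ln 2 * 2 ^ M)))"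
proof -
  have Rp: "0 < R (Suc i)" "R (Suc i) < 2^K" "s (Suc i) < R (Suc i)" if "i < n" for i
    using R_pos R_lt s_lt that by auto
  have inv: "2^M \<le> c i \<and> c i < 2^(M+K)" if "i \<le> n" for i
    using that
  proof (induction i)
    case 0
    have "(2::nat)^M < 2^(M+K)" using K_pos by (intro power_strict_increasing) auto
    then show ?case using enc0 by simp
  next
    case (Suc i)
    then have "i < n" by simp
    then have "c (Suc i) = fst (ubcs_encode M K (R (Suc i)) (s (Suc i)) (c i, bs i))"
      using enc_step by (metis fst_conv)
    then show ?case using enc_inv[OF _ _ Rp[OF \<open>i<n\<close>]] Suc by simp
  qed
  have dec1: "(s' (Suc i), c' i, bs' i) = (s (Suc i), c i, bs i)"
    if "c' (Suc i) = c (Suc i)" "bs' (Suc i) = bs (Suc i)" "i < n" for i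
  proof -
    have "(s' (Suc i), c' i, bs' i) = ubcs_decode M K (R (Suc i)) (c (Suc i), bs (Suc i))"
      using dec_step[OF that(3)] that by simp
    also have "\<dots> = ubcs_decode M K (R (Suc i)) (ubcs_encode M K (R (Suc i)) (s (Suc i)) (c i, bs i))"
      using enc_step[OF that(3)] by simp
    also have "\<dots> = (s (Suc i), c i, bs i)"
      using dec_enc[OF _ _ Rp[OF that(3)]] inv[of i] that by simp
    finally show ?thesis .
  qed
  have dec: "c' (n-k) = c (n-k) \<and> bs' (n-k) = bs (n-k)" if "k \<le> n" for k
    using that
  proof (induction k)
    case 0
    then show ?case using dec0 by simp
  next
    case (Suc k)
    define i where "i = n - Suc k"
    have i: "Suc i = n - k" "i < n" using Suc.prems by (auto simp: i_def)
    have "c' (Suc i) = c (Suc i) \<and> bs' (Suc i) = bs (Suc i)" using Suc i by simp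
    then have "(s' (Suc i), c' i, bs' i) = (s (Suc i), c i, bs i)" using dec1 i by blast
    then show ?case by (simp add: i_def[symmetric])
  qed
  have P1: "\<forall>i<n. s' (Suc i) = s (Suc i) \<and> c' i = c i \<and> bs' i = bs i"
  proof (intro allI impI)
    fix i assume "i < n"
    have "c' (Suc i) = c (Suc i) \<and> bs' (Suc i) = bs (Suc i)"
      using dec[of "n - Suc i"] \<open>i < n\<close> by (simp add: Suc_diff_Suc)
    then show "s' (Suc i) = s (Suc i) \<and> c' i = c i \<and> bs' i = bs i"
      using dec1 \<open>i < n\<close> by blast
  qed
  define e :: real where "e = 1 / (ln 2 * 2 ^ M * real K)"
  define d :: real where "d = 1 / (ln 2 * 2 ^ M)"
  define L where "L = (\<lambda>i. log 2 (real (c i)) + real K * real (length (bs i)))"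
  define S where "S = (\<lambda>i. \<Sum>j=1..i. log 2 (real (R j)))"
  have ln2: "ln (2::real) > 1/2" by (rule ln2_half)
  have eK: "e * real K = d" using K_pos by (simp add: e_def d_def)
  have e0: "0 < e" using K_pos by (simp add: e_def)
  have "(2::real) \<le> 2^M" using M_pos
    by (metis One_nat_def Suc_leI numeral_le_real_of_nat_iff of_nat_numeral power_increasing power_one_right of_nat_power zero_less_numeral Suc_1 one_le_numeral)
  moreover have "(1::real) \<le> real K" using K_pos by simp
  ultimately have "2 \<le> 2^M * real K" by (metis mult_mono mult.right_neutral dual_order.trans le_numeral_extra(1) zero_le_numeral zero_le_power)
  then have "ln 2 * 2 \<le> ln 2 * (2^M * real K)" by (intro mult_left_mono) auto
  then have "1 < ln 2 * (2^M * real K)" using ln2 by linarith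
  then have e1: "e < 1" by (simp add: e_def mult.assoc)
  have cpos: "real (c i) \<ge> 2^M" "c i > 0" if "i \<le> n" for i
  proof -
    have a: "2^M \<le> c i" using inv[OF that] by simp
    have "(0::nat) < 2^M" by simp
    then have "c i > 0" using a by linarith
    moreover have "real (2^M) \<le> real (c i)" using a by (simp only: of_nat_le_iff)
    ultimately show "real (c i) \<ge> 2^M" "c i > 0" by simp_all
  qed
  have logc: "log 2 (real (c i)) \<ge> real M" if "i \<le> n" for i
  proof -
    have "log 2 (2^M) \<le> log 2 (real (c i))" using cpos[OF that] by (subst log_le_cancel_iff) auto
    then show ?thesis by simp
  qed
  have invr: "(1-e)*(L i - M) - S i \<le> d + e*M - 1/(c i * ln 2) - e * log 2 (c i)"
    if "i \<le> n" for i
    using that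
  proof (induction i)
    case 0
    then show ?case using enc0 by (simp add: L_def S_def d_def mult_ac)
  next
    case (Suc i)
    then have i: "i < n" "i \<le> n" by auto
    define x where "x = c i * R (Suc i) + s (Suc i)"
    have key: "log 2 x - log 2 (c i) - log 2 (R (Suc i)) \<le> 1/(c i*ln 2) - 1/(x*ln 2)"
      unfolding x_def using key_log[of "c i" "R (Suc i)" "s (Suc i)"] Rp[OF i(1)] cpos[OF i(2)] by simp
    have SS: "S (Suc i) = S i + log 2 (R (Suc i))" by (simp add: S_def)
    have xpos: "x > 0" using cpos[OF i(2)] Rp[OF i(1)] by (simp add: x_def)
    have xinv: "1/(x*ln 2) \<ge> 0" by simp
    have enc: "(c (Suc i), bs (Suc i)) = (if x \<ge> 2^(M+K) then (x div 2^K, bs i @ [x mod 2^K]) else (x, bs i))"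
      using enc_step[OF i(1)] by (simp add: ubcs_encode_def Let_def x_def)
    have inc: "(1-e)*(L (Suc i) - L i) - log 2 (R (Suc i)) \<le> 1/(c i*ln 2) - 1/(c (Suc i)*ln 2) - e*(log 2 (c (Suc i)) - log 2 (c i))"
    proof (cases "x \<ge> 2^(M+K)")
      case True
      then have cs: "c (Suc i) = x div 2^K" "length (bs (Suc i)) = Suc (length (bs i))" using enc by auto
      define dd where "dd = log 2 (c (Suc i)) + K - log 2 (c i)"
      have Ld: "L (Suc i) - L i = dd" by (simp add: L_def dd_def cs(2) algebra_simps)
      have "(x div 2^K) * 2^K \<le> x" by (rule div_times_less_eq_dividend)
      then have "real (c (Suc i)) * 2^K \<le> real x" unfolding cs(1)
        by (metis of_nat_le_iff of_nat_mult of_nat_numeral of_nat_power)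
      then have "log 2 (real (c (Suc i)) * 2^K) \<le> log 2 x"
        using cpos[OF Suc.prems] xpos by (subst log_le_cancel_iff) auto
      then have A: "log 2 (c (Suc i)) + K \<le> log 2 x"
        using cpos[OF Suc.prems] by (simp add: log_mult)
      have "1/(c (Suc i)*ln 2) \<le> 1/(2^M * ln 2)"
        using cpos[OF Suc.prems] by (intro divide_left_mono mult_right_mono mult_pos_pos) auto
      then have B: "1/(c (Suc i)*ln 2) \<le> d" by (simp add: d_def mult_ac)
      have "(1-e)*dd = dd - e*(log 2 (c (Suc i)) - log 2 (c i)) - e*K" by (simp add: dd_def algebra_simps)
      then show ?thesis unfolding Ld using A B key xinv eK dd_def by linarith
    next
      case False
      then have cs: "c (Suc i) = x" "bs (Suc i) = bs i" using enc by auto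
      have "(1-e)*(L (Suc i) - L i) = (log 2 x - log 2 (c i)) - e*(log 2 (c (Suc i)) - log 2 (c i))"
        by (simp add: L_def cs algebra_simps)
      then show ?thesis using key cs by simp
    qed
    have "(1-e)*(L (Suc i) - M) = (1-e)*(L i - M) + (1-e)*(L (Suc i) - L i)" by (simp add: algebra_simps)
    moreover have "e * log 2 (c (Suc i)) = e * log 2 (c i) + e*(log 2 (c (Suc i)) - log 2 (c i))"
      by (simp add: algebra_simps)
    ultimately show ?case using Suc.IH[OF i(2)] inc SS by linarith
  qed
  have fin: "(1-e)*(L n - M) \<le> S n + d"
  proof -
    have "e * M \<le> e * log 2 (c n)" using logc[of n] e0 by simp
    moreover have "1/(c n * ln 2) \<ge> 0" by simp
    ultimately show ?thesis using invr[of n] by linarith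
  qed
  have Lb: "L n - M \<le> (S n + d) / (1-e)" using fin e1 by (simp add: field_simps mult.commute)
  have one: "1 \<le> 1 / (1-e)" using e1 e0 by (simp add: field_simps)
  define l where "l = (\<lambda>i. real_of_int \<lceil>log 2 (real (c i))\<rceil> + real (bs_len K (bs i)))"
  have l0: "l 0 = M" by (simp add: l_def enc0 bs_len_def)
  have ln: "l n < L n + 1" by (simp add: l_def L_def bs_len_def) linarith
  have "l n - l 0 < (S n + d)/(1-e) + 1/(1-e)" using Lb one l0 ln by linarith
  also have "\<dots> = 1/(1-e) * (S n + 1 + d)" by (simp add: add_divide_distrib[symmetric] algebra_simps)
  finally have "l n - l 0 < 1/(1-e) * (S n + 1 + d)" .
  then show ?thesis using P1 unfolding Let_def l_def[symmetric] e_def[symmetric] d_def[symmetric] S_def by simp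
qed

end
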